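(* Let $R,\mu$ be positive integers with $\mu<R$, $D=\gcd(R,\mu)$, and assume (as holds in each case below) that $D\ge2$ is prime and that under $G_{R,\mu}$ the ring $\mathbb Z_R$ has exactly two orbits $\{\lambda:\lambda\equiv0\pmod D\}$ and its complement. Then (with $t$ an integer): (i) If $R=3t\ge6$, $\mu=3$ ($D=3$): $\mathrm P^+_{R,3}(0)=\frac13\left(\binom{R-1}{2}-1\right)+1$, $\mathrm P^+_{R,3}(1)=\frac13\left(\binom{R-1}{2}-1\right)$. (ii) If $R=4t+2\ge6$, $\mu=4$ ($D=2$): $\mathrm P^+_{R,4}(0)=\frac14\left(\binom{R-1}{3}+\frac{R-2}{2}\right)$, $\mathrm P^+_{R,4}(1)=\frac14\left(\binom{R-1}{3}-\frac{R-2}{2}\right)$. (iii) If $R=5t\ge10$, $\mu=5$ ($D=5$): $\mathrm P^+_{R,5}(0)=\frac15\left(\binom{R-1}{4}-1\right)+1$, $\mathrm P^+_{R,5}(1)=\frac15\left(\binom{R-1}{4}-1\right)$. (iv) If $\mu=6$ and either $R\equiv2\pmod6$, $R\ge8$, or $R\equiv4\pmod6$, $R\ge10$ ($D=2$): $\mathrm P^+_{R,6}(0)=\frac16\left(\binom{R-1}{5}-\binom{R/2-1}{2}\right)$, $\mathrm P^+_{R,6}(1)=\frac16\left(\binom{R-1}{5}+\binom{R/2-1}{2}\right)$. (v) If $R=6t+3\ge9$, $\mu=6$ ($D=3$): $\mathrm P^+_{R,6}(0)=\frac13\left(\frac12\binom{R-1}{5}+\frac{R-3}{3}\right)$, $\mathrm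 P^+_{R,6}(1)=\frac16\left(\binom{R-1}{5}-\frac{R-3}{3}\right)$. (vi) If $R=7t\ge14$, $\mu=7$ ($D=7$): $\mathrm P^+_{R,7}(0)=\frac17\left(\binom{R-1}{6}-1\right)+1$, $\mathrm P^+_{R,7}(1)=\frac17\left(\binom{R-1}{6}-1\right)$. (vii) If $R=4t+6\ge10$, $\mu=8$ ($D=2$): $\mathrm P^+_{R,8}(0)=\frac18\left(\binom{R-1}{7}+\binom{R/2-1}{3}\right)$, $\mathrm P^+_{R,8}(1)=\frac18\left(\binom{R-1}{7}-\binom{R/2-1}{3}\right)$. (viii) If $\mu=9$ and either $R=9t+3\ge12$ or $R=9t+6\ge15$ ($D=3$): $\mathrm P^+_{R,9}(0)=\frac19\left(\binom{R-1}{8}+2\binom{R/3-1}{2}\right)$, $\mathrm P^+_{R,9}(1)=\frac19\left(\binom{R-1}{8}-\binom{R/3-1}{2}\right)$. Moreover, in every case $\mathrm P^+_{R,\mu}(\lambda)=\mathrm P^+_{R,\mu}(0)$ when $\lambda\equiv0\pmod D$ and $\mathrm P^+_{R,\mu}(\lambda)=\mathrm P^+_{R,\mu}(1)$ otherwise.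
   Context: $\mathbb Z_R$ is the ring of integers modulo $R$ and $\mathbb Z_R^*$ its units; $\mathrm P^+_{R,\mu}(\lambda)$ is the number of $\mu$-element subsets of $\mathbb Z_R$ (distinct elements) whose sum in $\mathbb Z_R$ is $\lambda$. $G_{R,\mu}$ is the group of maps $\lambda\mapsto\lambda\ell+u\mu$ on $\mathbb Z_R$ with $\ell\in\mathbb Z_R^*$, $u\in\{0,\dots,R-1\}$; orbits are the equivalence classes of "$\lambda_2=\lambda_1\varphi$ for some $\varphi\in G_{R,\mu}$". *)

theory Defs
  imports Complex_Main "HOL-Computational_Algebra.Primes"
begin

text \<open>Z_R is modelled as {0..<R} (nat) with arithmetic mod R.\<close>

definition Pplus :: "nat \<Rightarrow> nat \<Rightarrow> nat \<Rightarrow> nat" where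
  "Pplus R m x = card {S. S \<subseteq> {0..<R} \<and> card S = m \<and> (\<Sum>S) mod R = x mod R}"

definition Gmap :: "nat \<Rightarrow> nat \<Rightarrow> nat \<Rightarrow> nat \<Rightarrow> nat \<Rightarrow> nat" where
  "Gmap R m l u x = (x * l + u * m) mod R"

definition Ggroup :: "nat \<Rightarrow> nat \<Rightarrow> (nat \<Rightarrow> nat) set" where
  "Ggroup R m = {Gmap R m l u | l u. l < R \<and> coprime l R \<and> u < R}"

definition Gorbit :: "nat \<Rightarrow> nat \<Rightarrow> nat \<Rightarrow> nat set" where
  "Gorbit R m x = {\<phi> x | \<phi>. \<phi> \<in> Ggroup R m}"

definition Gorbits :: "nat \<Rightarrow> nat \<Rightarrow> nat set set" where
  "Gorbits R m = Gorbit R m ` {0..<R}"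

end

theory Submission imports Defs "HOL-Number_Theory.Number_Theory" begin

definition rotc :: "nat \<Rightarrow> nat \<Rightarrow> nat \<Rightarrow> nat \<Rightarrow> nat" where
  "rotc p j c x = (if x div p = j then p*j + (x mod p + c) mod p else x)"

lemma rotc_div: "0 < p \<Longrightarrow> rotc p j c x div p = x div p"
  by (auto simp: rotc_def)

lemma rotc_mod: "0 < p \<Longrightarrow> rotc p j c x mod p = (if x div p = j then (x mod p + c) mod p else x mod p)"
  by (auto simp: rotc_def)

lemma rotc_inj: assumes "0 < p" shows "inj (rotc p j c)"
proof (rule injI)
  fix x y assume h: "rotc p j c x = rotc p j c y"
  have d: "x div p = y div p" using rotc_div[OF assms, of j c x] rotc_div[OF assms, of j c y] h by simp
  have ex: "x = p * (x div p) + x mod p" "y = p * (y div p) + y mod p" by simp_all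
  show "x = y"
  proof (cases "x div p = j")
    case True
    hence "(x mod p + c) mod p = (y mod p + c) mod p" using h d by (simp add: rotc_def)
    hence "[x mod p + c = y mod p + c] (mod p)" by (simp add: cong_def)
    hence "[x mod p = y mod p] (mod p)" by (simp only: cong_add_rcancel_nat)
    hence "x mod p = y mod p" by (simp add: cong_def)
    then show ?thesis using d ex by simp
  next
    case False then show ?thesis using h d by (simp add: rotc_def)
  qed
qed

lemma rotc_range: assumes "0 < p" "x < p * m" shows "rotc p j c x < p * m"
proof (cases "x div p = j")
  case True
  have "x div p < m" using assms by (simp add: div_less_iff_less_mult mult.commute)
  hence "p * (j+1) \<le> p*m" using True by (intro mult_le_mono2) simp
  moreover have "(x mod p + c) mod p < p" using assms by simp
  ultimately show ?thesis using True by (simp add: rotc_def)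
next
  case False then show ?thesis using assms by (simp add: rotc_def)
qed

definition ccount :: "nat \<Rightarrow> nat set \<Rightarrow> nat \<Rightarrow> nat" where
  "ccount p S j = card {x\<in>S. x div p = j}"

lemma ccount_rotc: assumes "0 < p" shows "ccount p (rotc p j c ` S) j' = ccount p S j'"
proof -
  have "{x\<in>rotc p j c ` S. x div p = j'} = rotc p j c ` {x\<in>S. x div p = j'}"
    using rotc_div[OF assms] by auto
  moreover have "inj_on (rotc p j c) {x\<in>S. x div p = j'}"
    using rotc_inj[OF assms] by (simp add: inj_on_def inj_def)
  ultimately show ?thesis unfolding ccount_def by (simp add: card_image)
qed

lemma sum_rotc_mod: assumes "0 < p" "finite S"
  shows "(\<Sum>(rotc p j c ` S)) mod p = (\<Sum>S + c * ccount p S j) mod p"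
proof -
  have inj: "inj_on (rotc p j c) S" using rotc_inj[OF assms(1)] by (simp add: inj_on_def inj_def)
  have "\<Sum>(rotc p j c ` S) = (\<Sum>x\<in>S. rotc p j c x)"
    using sum.reindex[OF inj, of "\<lambda>x. x"] by simp
  also have "\<dots> mod p = (\<Sum>x\<in>S. rotc p j c x mod p) mod p" by (simp only: mod_sum_eq)
  also have "(\<Sum>x\<in>S. rotc p j c x mod p) = (\<Sum>x\<in>S. (x + (if x div p = j then c else 0)) mod p)"
    by (rule sum.cong, simp, simp add: rotc_mod[OF assms(1)] mod_add_left_eq)
  also have "(\<Sum>x\<in>S. (x + (if x div p = j then c else 0)) mod p) mod p = (\<Sum>x\<in>S. (x + (if x div p = j then c else 0))) mod p" by (simp only: mod_sum_eq)
  also have "(\<Sum>x\<in>S. (x + (if x div p = j then c else 0))) = \<Sum>S + c * ccount p S j"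
    using assms(2) by (simp add: sum.distrib sum.If_cases ccount_def Int_def)
  finally show ?thesis .
qed

definition nonInv :: "nat \<Rightarrow> nat set \<Rightarrow> bool" where
  "nonInv p S = (\<exists>j. 0 < ccount p S j \<and> ccount p S j < p)"
definition jS :: "nat \<Rightarrow> nat set \<Rightarrow> nat" where
  "jS p S = (LEAST j. 0 < ccount p S j \<and> ccount p S j < p)"
definition cS :: "nat \<Rightarrow> nat set \<Rightarrow> nat" where
  "cS p S = (ccount p S (jS p S)) ^ (p - 2)"
definition fS :: "nat \<Rightarrow> nat set \<Rightarrow> nat set" where
  "fS p S = rotc p (jS p S) (cS p S) ` S"

lemma ccount_fS: "0 < p \<Longrightarrow> ccount p (fS p S) = ccount p S"
  by (rule ext) (simp add: fS_def ccount_rotc)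

lemma fS_same: assumes "0 < p" shows "nonInv p (fS p S) = nonInv p S" "jS p (fS p S) = jS p S" "cS p (fS p S) = cS p S"
  using ccount_fS[OF assms, of S] by (simp_all add: nonInv_def jS_def cS_def)

lemma fS_inj: assumes "0 < p" shows "inj_on (fS p) {S. nonInv p S}"
proof (rule inj_onI)
  fix S T assume "S \<in> {S. nonInv p S}" "T \<in> {S. nonInv p S}" and e: "fS p S = fS p T"
  have "ccount p S = ccount p T" using ccount_fS[OF assms, of S] ccount_fS[OF assms, of T] e by simp
  hence "jS p S = jS p T" "cS p S = cS p T" by (simp_all add: jS_def cS_def)
  hence "rotc p (jS p S) (cS p S) ` S = rotc p (jS p S) (cS p S) ` T" using e by (simp add: fS_def)
  thus "S = T" using rotc_inj[OF assms] by (simp add: inj_image_eq_iff)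
qed

lemma fS_sum: assumes "prime p" "finite S" "nonInv p S"
  shows "(\<Sum>(fS p S)) mod p = (\<Sum>S mod p + 1) mod p"
proof -
  have p0: "0 < p" "2 \<le> p" using prime_ge_2_nat[OF assms(1)] by auto
  define k where "k = ccount p S (jS p S)"
  have "0 < k \<and> k < p" unfolding k_def jS_def using assms(3) unfolding nonInv_def by (rule LeastI_ex)
  hence nd: "\<not> p dvd k" by (auto dest: dvd_imp_le)
  have "k * cS p S = k ^ (p - 1)" unfolding cS_def k_def[symmetric]
    using p0 by (metis Suc_diff_Suc Suc_1 diff_Suc_1 numeral_2_eq_2 power_Suc Suc_le_lessD)
  hence c1: "[cS p S * k = 1] (mod p)" using fermat_theorem[OF assms(1) nd] by (simp add: mult.commute)
  have "(\<Sum>(fS p S)) mod p = (\<Sum>S + cS p S * k) mod p"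
    unfolding fS_def k_def by (rule sum_rotc_mod[OF p0(1) assms(2)])
  also have "\<dots> = (\<Sum>S + 1) mod p" using c1 unfolding cong_def by (metis mod_add_right_eq)
  also have "\<dots> = (\<Sum>S mod p + 1) mod p" by (simp only: mod_add_left_eq)
  finally show ?thesis .
qed

lemma fS_range: assumes "0 < p" "S \<subseteq> {0..<p*m}" shows "fS p S \<subseteq> {0..<p*m}"
  using assms rotc_range[OF assms(1)] by (auto simp: fS_def)

lemma fS_card: assumes "0 < p" shows "card (fS p S) = card S"
  unfolding fS_def using rotc_inj[OF assms] by (simp add: card_image inj_on_def inj_def)

definition Fnon :: "nat \<Rightarrow> nat \<Rightarrow> nat \<Rightarrow> nat \<Rightarrow> nat set set" where
  "Fnon p m mu r = {S. S \<subseteq> {0..<p*m} \<and> card S = mu \<and> nonInv p S \<and> \<Sum>S mod p = r}"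

lemma Fnon_le: assumes "prime p" shows "card (Fnon p m mu r) \<le> card (Fnon p m mu ((r+1) mod p))"
proof (rule card_inj_on_le[of "fS p"])
  have p0: "0 < p" using assms prime_gt_0_nat by blast
  show "inj_on (fS p) (Fnon p m mu r)"
    by (rule inj_on_subset[OF fS_inj[OF p0]]) (auto simp: Fnon_def)
  show "fS p ` Fnon p m mu r \<subseteq> Fnon p m mu ((r + 1) mod p)"
  proof
    fix T assume "T \<in> fS p ` Fnon p m mu r"
    then obtain S where S: "S \<in> Fnon p m mu r" "T = fS p S" by blast
    have fin: "finite S" using S(1) unfolding Fnon_def by (auto intro: finite_subset)
    show "T \<in> Fnon p m mu ((r + 1) mod p)"
      using S fS_range[OF p0] fS_card[OF p0] fS_same(1)[OF p0] fS_sum[OF assms fin]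
      unfolding Fnon_def by auto
  qed
  show "finite (Fnon p m mu ((r + 1) mod p))"
    by (rule finite_subset[of _ "Pow {0..<p*m}"]) (auto simp: Fnon_def)
qed

lemma cyc_eq: fixes p :: nat assumes "0 < p" "\<And>r. r < p \<Longrightarrow> g r \<le> (g ((r+1) mod p) :: nat)"
  shows "r < p \<Longrightarrow> g r = g 0"
proof -
  have up: "r < p \<Longrightarrow> g 0 \<le> g r" for r
  proof (induction r)
    case 0 then show ?case by simp
  next
    case (Suc r) then show ?case using assms(2)[of r] by simp
  qed
  have dn: "k < p \<Longrightarrow> g (p - 1 - k) \<le> g (p - 1)" for k
  proof (induction k)
    case 0 then show ?case by simp
  next
    case (Suc k)
    have "g (p - 1 - Suc k) \<le> g ((p - 1 - Suc k + 1) mod p)" using assms(2)[of "p - 1 - Suc k"] Suc by simp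
    also have "(p - 1 - Suc k + 1) mod p = p - 1 - k" using Suc by simp
    finally show ?case using Suc by simp
  qed
  have last: "g (p - 1) \<le> g 0" using assms(2)[of "p - 1"] assms(1) by simp
  assume r: "r < p"
  have "g r \<le> g (p - 1)" using dn[of "p - 1 - r"] r by simp
  thus "g r = g 0" using up[OF r] last by simp
qed


definition colU :: "nat \<Rightarrow> nat set \<Rightarrow> nat set" where
  "colU p J = (\<Union>j\<in>J. {p*j..<p*j+p})"

lemma col_mem: assumes "0 < (p::nat)" shows "x \<in> {p*j..<p*j+p} \<longleftrightarrow> x div p = j"
proof
  assume h: "x \<in> {p*j..<p*j+p}"
  then obtain i where "x = p*j + i" "i < p" by (metis atLeastLessThan_iff add_less_cancel_left le_Suc_ex)
  thus "x div p = j" using assms by simp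
next
  assume h: "x div p = j"
  have "x = p * (x div p) + x mod p" by simp
  moreover have "x mod p < p" using assms by simp
  ultimately show "x \<in> {p*j..<p*j+p}" using h by (metis atLeastLessThan_iff le_add1 nat_add_left_cancel_less)
qed

lemma col_eq: "0 < (p::nat) \<Longrightarrow> {x. x div p = j} = {p*j..<p*j+p}"
  using col_mem[of p _ j] by blast

lemma col_disj: assumes "0 < (p::nat)" "i \<noteq> j" shows "{p*i..<p*i+p} \<inter> {p*j..<p*j+p} = {}"
proof (rule equals0I)
  fix x assume "x \<in> {p*i..<p*i+p} \<inter> {p*j..<p*j+p}"
  hence "x div p = i" "x div p = j" using col_mem[OF assms(1), of x] by blast+
  thus False using assms(2) by simp
qed

lemma div_lt: "x < p * m \<Longrightarrow> x div p < (m::nat)"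
  by (rule less_mult_imp_div_less) (simp add: mult.commute)

lemma colU_mem2: assumes "0 < p" shows "x \<in> colU p J \<longleftrightarrow> x div p \<in> J"
proof
  assume "x \<in> colU p J"
  then obtain j where "j \<in> J" "x \<in> {p*j..<p*j+p}" unfolding colU_def by blast
  thus "x div p \<in> J" using col_mem[OF assms, of x j] by simp
next
  assume "x div p \<in> J"
  moreover have "x \<in> {p*(x div p)..<p*(x div p)+p}" using col_mem[OF assms, of x "x div p"] by simp
  ultimately show "x \<in> colU p J" unfolding colU_def by blast
qed

lemma colU_card: assumes "0 < p" "finite J" shows "card (colU p J) = p * card J"
proof -
  have "card (colU p J) = (\<Sum>j\<in>J. card {p*j..<p*j+p})"
    unfolding colU_def
  proof (rule card_UN_disjoint[OF assms(2)])
    show "\<forall>i\<in>J. finite {p * i..<p * i + p}" by simp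
    show "\<forall>i\<in>J. \<forall>j\<in>J. i \<noteq> j \<longrightarrow> {p * i..<p * i + p} \<inter> {p * j..<p * j + p} = {}"
      using col_disj[OF assms(1)] by blast
  qed
  thus ?thesis by simp
qed

lemma colU_sum: assumes "0 < p" "finite J" shows "\<Sum>(colU p J) mod p = (card J * \<Sum>{0..<p}) mod p"
proof -
  have "\<Sum>(colU p J) = (\<Sum>j\<in>J. \<Sum>{p*j..<p*j+p})"
    unfolding colU_def
  proof (rule sum.UNION_disjoint[OF assms(2)])
    show "\<forall>i\<in>J. finite {p * i..<p * i + p}" by simp
    show "\<forall>i\<in>J. \<forall>j\<in>J. i \<noteq> j \<longrightarrow> {p * i..<p * i + p} \<inter> {p * j..<p * j + p} = {}"
      using col_disj[OF assms(1)] by blast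
  qed
  also have "\<dots> = (\<Sum>j\<in>J. p*p*j + \<Sum>{0..<p})"
  proof (rule sum.cong[OF refl])
    fix j
    have "\<Sum>{p*j..<p*j+p} = (\<Sum>i\<in>{0..<p}. p*j + i)"
      by (rule sum.reindex_bij_witness[of _ "\<lambda>i. p*j + i" "\<lambda>x. x - p*j"]) auto
    also have "\<dots> = p*p*j + \<Sum>{0..<p}" by (simp add: sum.distrib)
    finally show "\<Sum>{p*j..<p*j+p} = p*p*j + \<Sum>{0..<p}" .
  qed
  also have "\<dots> = p * (\<Sum>j\<in>J. p*j) + card J * \<Sum>{0..<p}"
    by (simp add: sum.distrib sum_distrib_left mult.assoc)
  finally show ?thesis by simp
qed

definition Finv :: "nat \<Rightarrow> nat \<Rightarrow> nat \<Rightarrow> nat set set" where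
  "Finv p m mu = {S. S \<subseteq> {0..<p*m} \<and> card S = mu \<and> \<not> nonInv p S}"

lemma ccount_le: assumes "0 < p" shows "ccount p S j \<le> p"
proof -
  have "{x\<in>S. x div p = j} \<subseteq> {p*j..<p*j+p}" using col_eq[OF assms] by blast
  hence "ccount p S j \<le> card {p*j..<p*j+p}" unfolding ccount_def by (rule card_mono[rotated]) simp
  thus ?thesis by simp
qed

lemma inv_decomp: assumes "0 < p" "S \<subseteq> {0..<p*m}" "\<not> nonInv p S"
  shows "S = colU p {j. j < m \<and> ccount p S j = p}"
proof
  have fin: "finite S" using assms(2) finite_subset by blast
  show "S \<subseteq> colU p {j. j < m \<and> ccount p S j = p}"
  proof
    fix x assume x: "x \<in> S"
    define j where "j = x div p"
    have "x < p*m" using x assms(2) by auto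
    hence "j < m" unfolding j_def by (rule div_lt)
    have "{y\<in>S. y div p = j} \<noteq> {}" using x j_def by blast
    hence "0 < ccount p S j" using fin unfolding ccount_def by (simp add: card_gt_0_iff)
    moreover have "ccount p S j = 0 \<or> p \<le> ccount p S j" using assms(3) unfolding nonInv_def by (auto simp: not_less)
    ultimately have "ccount p S j = p" using ccount_le[OF assms(1), of S j] by auto
    thus "x \<in> colU p {j. j < m \<and> ccount p S j = p}" using \<open>j < m\<close> colU_mem2[OF assms(1)] j_def by simp
  qed
  show "colU p {j. j < m \<and> ccount p S j = p} \<subseteq> S"
  proof
    fix x assume "x \<in> colU p {j. j < m \<and> ccount p S j = p}"
    then obtain j where j: "ccount p S j = p" "x \<in> {p*j..<p*j+p}" unfolding colU_def by blast
    have sub: "{y\<in>S. y div p = j} \<subseteq> {p*j..<p*j+p}" using col_eq[OF assms(1)] by blast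
    have "{y\<in>S. y div p = j} = {p*j..<p*j+p}"
      by (rule card_subset_eq[OF _ sub]) (use j(1) in \<open>simp_all add: ccount_def\<close>)
    thus "x \<in> S" using j(2) by blast
  qed
qed

lemma colU_mem: "0 < p \<Longrightarrow> p*j \<in> colU p J \<longleftrightarrow> j \<in> J"
  using colU_mem2[of p "p*j" J] by simp

lemma colU_ccount: assumes "0 < p" shows "ccount p (colU p J) j = (if j \<in> J then p else 0)"
proof -
  have "{x\<in>colU p J. x div p = j} = (if j \<in> J then {x. x div p = j} else {})"
    using colU_mem2[OF assms] by auto
  thus ?thesis unfolding ccount_def using col_eq[OF assms] by simp
qed

lemma Finv_image: assumes "0 < p" "p dvd mu"
  shows "Finv p m mu = colU p ` {J. J \<subseteq> {..<m} \<and> card J = mu div p}"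
proof
  show "Finv p m mu \<subseteq> colU p ` {J. J \<subseteq> {..<m} \<and> card J = mu div p}"
  proof
    fix S assume S: "S \<in> Finv p m mu"
    define J where "J = {j. j < m \<and> ccount p S j = p}"
    have e: "S = colU p J" unfolding J_def using S inv_decomp[OF assms(1)] by (auto simp: Finv_def)
    have fJ: "finite J" unfolding J_def by simp
    have "mu = p * card J" using S e colU_card[OF assms(1) fJ] by (simp add: Finv_def)
    hence "card J = mu div p" using assms(1) by simp
    thus "S \<in> colU p ` {J. J \<subseteq> {..<m} \<and> card J = mu div p}" using e J_def by blast
  qed
  show "colU p ` {J. J \<subseteq> {..<m} \<and> card J = mu div p} \<subseteq> Finv p m mu"
  proof
    fix S assume "S \<in> colU p ` {J. J \<subseteq> {..<m} \<and> card J = mu div p}"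
    then obtain J where J: "J \<subseteq> {..<m}" "card J = mu div p" "S = colU p J" by blast
    have fJ: "finite J" using J(1) finite_subset by blast
    have "card S = mu" using colU_card[OF assms(1) fJ] J assms(2) by simp
    moreover have "S \<subseteq> {0..<p*m}"
    proof
      fix x assume "x \<in> S"
      hence "x div p < m" using J colU_mem2[OF assms(1)] by auto
      hence "x div p + 1 \<le> m" by simp
      hence "p * (x div p + 1) \<le> p*m" by (rule mult_le_mono2)
      moreover have "x < p * (x div p + 1)"
        using assms(1) by (metis add.commute div_mult_mod_eq mod_less_divisor mult.commute mult_Suc_right nat_add_left_cancel_less Suc_eq_plus1)
      ultimately show "x \<in> {0..<p*m}" by simp
    qed
    moreover have "\<not> nonInv p S" using J(3) colU_ccount[OF assms(1)] unfolding nonInv_def by simp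
    ultimately show "S \<in> Finv p m mu" by (simp add: Finv_def)
  qed
qed

lemma Finv_card: assumes "0 < p" "p dvd mu" shows "card (Finv p m mu) = m choose (mu div p)"
proof -
  have "inj_on (colU p) {J. J \<subseteq> {..<m} \<and> card J = mu div p}"
    by (rule inj_onI) (use colU_mem[OF assms(1)] in blast)
  hence "card (Finv p m mu) = card {J. J \<subseteq> {..<m} \<and> card J = mu div p}"
    using Finv_image[OF assms] by (simp add: card_image)
  thus ?thesis by (simp add: n_subsets)
qed

lemma Finv_sum: assumes "0 < p" "p dvd mu" "S \<in> Finv p m mu"
  shows "\<Sum>S mod p = ((mu div p) * \<Sum>{0..<p}) mod p"
proof -
  obtain J where J: "J \<subseteq> {..<m}" "card J = mu div p" "S = colU p J"
    using assms(3) Finv_image[OF assms(1,2)] by blast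
  have fJ: "finite J" using J(1) finite_subset by blast
  show ?thesis using colU_sum[OF assms(1) fJ] J by simp
qed


definition Mset :: "nat \<Rightarrow> nat \<Rightarrow> nat \<Rightarrow> nat \<Rightarrow> nat set set" where
  "Mset p m mu r = {S. S \<subseteq> {0..<p*m} \<and> card S = mu \<and> \<Sum>S mod p = r}"

lemma Mdist: assumes "prime p" "p dvd mu"
  shows "\<exists>W. \<forall>r<p. card (Mset p m mu r) = W + (if r = ((mu div p) * \<Sum>{0..<p}) mod p then m choose (mu div p) else 0)"
proof -
  have p0: "0 < p" using assms(1) prime_gt_0_nat by blast
  define W where "W = card (Fnon p m mu 0)"
  have Weq: "r < p \<Longrightarrow> card (Fnon p m mu r) = W" for r
    unfolding W_def by (rule cyc_eq[of p "\<lambda>r. card (Fnon p m mu r)", OF p0 Fnon_le[OF assms(1)]])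
  have "card (Mset p m mu r) = W + (if r = ((mu div p) * \<Sum>{0..<p}) mod p then m choose (mu div p) else 0)"
    if r: "r < p" for r
  proof -
    define I where "I = {S\<in>Finv p m mu. \<Sum>S mod p = r}"
    have split: "Mset p m mu r = Fnon p m mu r \<union> I"
      unfolding Mset_def Fnon_def I_def Finv_def by blast
    have fin: "finite (Pow {0..<p*m})" by simp
    have fF: "finite (Fnon p m mu r)" by (rule finite_subset[OF _ fin]) (auto simp: Fnon_def)
    have fI: "finite I" by (rule finite_subset[OF _ fin]) (auto simp: I_def Finv_def)
    have "Fnon p m mu r \<inter> I = {}" unfolding Fnon_def I_def Finv_def by blast
    hence c: "card (Mset p m mu r) = card (Fnon p m mu r) + card I"
      using split card_Un_disjoint[OF fF fI] by simp
    have "I = (if r = ((mu div p) * \<Sum>{0..<p}) mod p then Finv p m mu else {})"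
      unfolding I_def using Finv_sum[OF p0 assms(2)] by auto
    thus ?thesis using c Weq[OF r] Finv_card[OF p0 assms(2)] by simp
  qed
  thus ?thesis by blast
qed

definition shiftR :: "nat \<Rightarrow> nat \<Rightarrow> nat \<Rightarrow> nat" where
  "shiftR R t x = (x + t) mod R"

lemma trans_inj: "inj_on (shiftR R t) {0..<R}"
proof (rule inj_onI)
  fix x y assume xy: "x \<in> {0..<R}" "y \<in> {0..<R}" and "shiftR R t x = shiftR R t y"
  hence "[x + t = y + t] (mod R)" by (simp add: shiftR_def cong_def)
  hence "[x = y] (mod R)" by (simp only: cong_add_rcancel_nat)
  thus "x = y" using xy by (simp add: cong_def)
qed

lemma trans_sum: assumes "S \<subseteq> {0..<R}" shows "\<Sum>(shiftR R t ` S) mod R = (\<Sum>S + card S * t) mod R"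
proof -
  have inj: "inj_on (shiftR R t) S" using inj_on_subset[OF trans_inj assms] .
  have fin: "finite S" using assms finite_subset by blast
  have "\<Sum>(shiftR R t ` S) = (\<Sum>x\<in>S. shiftR R t x)"
    using sum.reindex[OF inj, of "\<lambda>x. x"] by simp
  also have "\<dots> mod R = (\<Sum>x\<in>S. (x + t)) mod R" unfolding shiftR_def by (simp only: mod_sum_eq)
  also have "(\<Sum>x\<in>S. (x + t)) = \<Sum>S + card S * t" using fin by (simp add: sum.distrib)
  finally show ?thesis .
qed

lemma Pplus_trans: assumes "0 < R" shows "Pplus R mu s \<le> Pplus R mu (s + mu * t)"
  unfolding Pplus_def
proof (rule card_inj_on_le[of "\<lambda>S. shiftR R t ` S"])
  show "inj_on (\<lambda>S. shiftR R t ` S) {S. S \<subseteq> {0..<R} \<and> card S = mu \<and> \<Sum>S mod R = s mod R}"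
    by (rule inj_onI) (auto simp: inj_on_image_eq_iff[OF trans_inj])
  show "(\<lambda>S. shiftR R t ` S) ` {S. S \<subseteq> {0..<R} \<and> card S = mu \<and> \<Sum>S mod R = s mod R}
    \<subseteq> {S. S \<subseteq> {0..<R} \<and> card S = mu \<and> \<Sum>S mod R = (s + mu * t) mod R}"
  proof
    fix T assume "T \<in> (\<lambda>S. shiftR R t ` S) ` {S. S \<subseteq> {0..<R} \<and> card S = mu \<and> \<Sum>S mod R = s mod R}"
    then obtain S where S: "S \<subseteq> {0..<R}" "card S = mu" "\<Sum>S mod R = s mod R" "T = shiftR R t ` S" by blast
    have "T \<subseteq> {0..<R}" using S(4) assms by (auto simp: shiftR_def)
    moreover have "card T = mu" using S card_image[OF inj_on_subset[OF trans_inj S(1)]] by simp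
    moreover have "\<Sum>T mod R = (s + mu * t) mod R"
    proof -
      have "\<Sum>T mod R = (\<Sum>S + mu * t) mod R" using trans_sum[OF S(1), of t] S by simp
      also have "\<dots> = (\<Sum>S mod R + mu * t) mod R" by (simp only: mod_add_left_eq)
      also have "\<dots> = (s + mu * t) mod R" using S(3) by (simp add: mod_add_left_eq)
      finally show ?thesis .
    qed
    ultimately show "T \<in> {S. S \<subseteq> {0..<R} \<and> card S = mu \<and> \<Sum>S mod R = (s + mu * t) mod R}" by blast
  qed
  show "finite {S. S \<subseteq> {0..<R} \<and> card S = mu \<and> \<Sum>S mod R = (s + mu * t) mod R}"
    by (rule finite_subset[of _ "Pow {0..<R}"]) auto
qed

lemma Pplus_mod: "Pplus R mu (x mod R) = Pplus R mu x"
  by (simp add: Pplus_def)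

lemma Pplus_step: assumes "0 < R" "0 < mu" shows "Pplus R mu s \<le> Pplus R mu (s + gcd R mu)"
proof -
  obtain x y where xy: "mu * x = R * y + gcd mu R" using bezout_nat[of mu R] assms(2) by auto
  have "s + mu * x = (s + gcd R mu) + R * y" using xy by (simp add: gcd.commute)
  hence "(s + mu * x) mod R = (s + gcd R mu) mod R" by (simp only: mod_mult_self2)
  hence "Pplus R mu (s + mu * x) = Pplus R mu (s + gcd R mu)" using Pplus_mod[of R mu] by metis
  thus ?thesis using Pplus_trans[OF assms(1), of mu s x] by simp
qed


lemma Pplus_period: assumes "0 < R" "0 < mu" shows "Pplus R mu (s + gcd R mu) = Pplus R mu s"
proof -
  define D where "D = gcd R mu"
  have up: "Pplus R mu s' \<le> Pplus R mu (s' + D * k)" for s' k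
  proof (induction k)
    case 0 then show ?case by simp
  next
    case (Suc k)
    have st: "Pplus R mu (s' + D * k) \<le> Pplus R mu (s' + D * k + D)"
      using Pplus_step[OF assms] D_def by simp
    have e: "s' + D * Suc k = s' + D * k + D" by simp
    show ?case using le_trans[OF Suc.IH st] by (simp only: e)
  qed
  have "D dvd R" unfolding D_def by simp
  then obtain q where q: "R = D * q" by (auto simp: dvd_def)
  obtain q' where q': "q = Suc q'" using q assms(1) by (cases q) auto
  have "Pplus R mu (s + D) \<le> Pplus R mu (s + D + D * q')" by (rule up)
  also have "s + D + D * q' = s + R" using q q' by simp
  also have "Pplus R mu (s + R) = Pplus R mu s"
  proof -
    have "(s + R) mod R = s mod R" by simp
    thus ?thesis using Pplus_mod[of R mu "s + R"] Pplus_mod[of R mu s] by simp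
  qed
  finally have "Pplus R mu (s + D) \<le> Pplus R mu s" .
  moreover have "Pplus R mu s \<le> Pplus R mu (s + D)" using up[of s 1] by simp
  ultimately show ?thesis unfolding D_def by simp
qed

lemma Pplus_modD: assumes "0 < R" "0 < mu" shows "Pplus R mu s = Pplus R mu (s mod gcd R mu)"
proof -
  define D where "D = gcd R mu"
  have "Pplus R mu (r + D * k) = Pplus R mu r" for r k
  proof (induction k)
    case 0 then show ?case by simp
  next
    case (Suc k)
    have e: "r + D * Suc k = r + D * k + D" by simp
    have "Pplus R mu (r + D * Suc k) = Pplus R mu (r + D * k + D)" by (simp only: e)
    also have "\<dots> = Pplus R mu (r + D * k)" using Pplus_period[OF assms] D_def by simp
    finally show ?case using Suc by simp
  qed
  from this[of "s mod D" "s div D"] show ?thesis unfolding D_def by simp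
qed

lemma count_res: assumes "r < (p::nat)" shows "card {s. s < p*m \<and> s mod p = r} = m"
proof -
  have p0: "0 < p" using assms by simp
  have "{s. s < p*m \<and> s mod p = r} = (\<lambda>k. r + p*k) ` {..<m}"
  proof
    show "{s. s < p*m \<and> s mod p = r} \<subseteq> (\<lambda>k. r + p*k) ` {..<m}"
    proof
      fix s assume s: "s \<in> {s. s < p*m \<and> s mod p = r}"
      have h1: "s div p * p + s mod p = s" by (rule div_mult_mod_eq)
      have h2: "s mod p = r" using s by simp
      have "s = r + p * (s div p)" using h1 h2 by (metis add.commute mult.commute)
      moreover have "s div p < m" using s div_lt by blast
      ultimately show "s \<in> (\<lambda>k. r + p*k) ` {..<m}" by blast
    qed
    show "(\<lambda>k. r + p*k) ` {..<m} \<subseteq> {s. s < p*m \<and> s mod p = r}"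
    proof
      fix s assume "s \<in> (\<lambda>k. r + p*k) ` {..<m}"
      then obtain k where k: "k < m" "s = r + p*k" by blast
      have "p * (k+1) \<le> p * m" using k(1) by (intro mult_le_mono2) simp
      hence "s < p*m" using k(2) assms by simp
      moreover have "s mod p = r" using k(2) assms by simp
      ultimately show "s \<in> {s. s < p*m \<and> s mod p = r}" by blast
    qed
  qed
  moreover have "inj_on (\<lambda>k. r + p*k) {..<m}" using p0 by (auto simp: inj_on_def)
  ultimately show ?thesis by (simp add: card_image)
qed

lemma Mset_Pplus: assumes "0 < mu" "p = gcd (p*m) mu" "0 < m" "0 < p" "r < p"
  shows "card (Mset p m mu r) = m * Pplus (p*m) mu r"
proof -
  define R where "R = p*m"
  have R0: "0 < R" using assms R_def by simp
  define A where "A = (\<lambda>s. {S. S \<subseteq> {0..<R} \<and> card S = mu \<and> \<Sum>S mod R = s})"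
  have e: "Mset p m mu r = (\<Union>s\<in>{s. s < R \<and> s mod p = r}. A s)"
  proof -
    have "\<Sum>S mod p = (\<Sum>S mod R) mod p" for S unfolding R_def by (rule mod_mod_cancel[symmetric]) simp
    thus ?thesis unfolding Mset_def A_def R_def using R0 R_def by auto
  qed
  have fA: "\<forall>s\<in>{s. s < R \<and> s mod p = r}. finite (A s)"
    unfolding A_def by (auto intro: finite_subset[of _ "Pow {0..<R}"])
  have dA: "\<forall>s\<in>{s. s < R \<and> s mod p = r}. \<forall>t\<in>{s. s < R \<and> s mod p = r}. s \<noteq> t \<longrightarrow> A s \<inter> A t = {}"
    unfolding A_def by auto
  have "card (Mset p m mu r) = (\<Sum>s\<in>{s. s < R \<and> s mod p = r}. card (A s))"
    unfolding e by (rule card_UN_disjoint[OF _ fA dA]) simp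
  also have "\<dots> = (\<Sum>s\<in>{s. s < R \<and> s mod p = r}. Pplus R mu r)"
  proof (rule sum.cong[OF refl])
    fix s assume s: "s \<in> {s. s < R \<and> s mod p = r}"
    have "card (A s) = Pplus R mu s" unfolding A_def Pplus_def using s by simp
    also have "\<dots> = Pplus R mu (s mod p)" using Pplus_modD[OF R0 assms(1)] assms(2) R_def by simp
    finally show "card (A s) = Pplus R mu r" using s by simp
  qed
  also have "\<dots> = m * Pplus R mu r" using count_res[OF assms(5), of m] R_def by simp
  finally show ?thesis unfolding R_def .
qed


lemma Mset_total: assumes "0 < p" shows "(\<Sum>r<p. card (Mset p m mu r)) = (p*m) choose mu"
proof -
  have e: "{S. S \<subseteq> {0..<p*m} \<and> card S = mu} = (\<Union>r\<in>{..<p}. Mset p m mu r)"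
    unfolding Mset_def using assms by auto
  have "card (\<Union>r\<in>{..<p}. Mset p m mu r) = (\<Sum>r<p. card (Mset p m mu r))"
    by (rule card_UN_disjoint) (auto simp: Mset_def intro: finite_subset[of _ "Pow {0..<p*m}"])
  thus ?thesis using e n_subsets[of "{0..<p*m}" mu] by simp
qed

lemma key: assumes "prime p" "p = gcd R mu" "0 < mu" "0 < R"
  shows "\<exists>W. (\<forall>r<p. (R div p) * Pplus R mu r = W + (if r = ((mu div p) * \<Sum>{0..<p}) mod p then (R div p) choose (mu div p) else 0))
     \<and> p * W + ((R div p) choose (mu div p)) = R choose mu"
proof -
  have p0: "0 < p" using assms(1) prime_gt_0_nat by blast
  have pR: "p dvd R" using assms(2) by simp
  have pmu: "p dvd mu" using assms(2) by simp
  define m where "m = R div p"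
  have R: "R = p * m" using pR m_def by simp
  have m0: "0 < m" using R assms(4) by (cases m) auto
  define e where "e = ((mu div p) * \<Sum>{0..<p}) mod p"
  have ep: "e < p" unfolding e_def using p0 by simp
  obtain W where W: "\<forall>r<p. card (Mset p m mu r) = W + (if r = e then m choose (mu div p) else 0)"
    using Mdist[OF assms(1) pmu, of m] unfolding e_def by blast
  have g: "p = gcd (p*m) mu" using assms(2) R by simp
  have A: "\<forall>r<p. m * Pplus R mu r = W + (if r = e then m choose (mu div p) else 0)"
    using W Mset_Pplus[OF assms(3) g m0 p0] R by simp
  have "(\<Sum>r<p. card (Mset p m mu r)) = (\<Sum>r<p. W + (if r = e then m choose (mu div p) else 0))"
    using W by simp
  also have "\<dots> = p * W + (m choose (mu div p))" using ep by (simp add: sum.distrib)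
  finally have "p * W + (m choose (mu div p)) = R choose mu" using Mset_total[OF p0, of m mu] R by simp
  thus ?thesis using A unfolding m_def e_def by blast
qed


lemma key2: assumes "prime p" "p = gcd R mu" "0 < mu" "0 < R" "r < p"
  shows "real (Pplus R mu r) = (real (R - 1 choose (mu - 1)) - real (R div p - 1 choose (mu div p - 1))) / real mu
     + (if r = ((mu div p) * \<Sum>{0..<p}) mod p then real (R div p - 1 choose (mu div p - 1)) / real (mu div p) else 0)"
proof -
  have p0: "0 < p" using assms(1) prime_gt_0_nat by blast
  have pR: "p dvd R" using assms(2) by simp
  have pmu: "p dvd mu" using assms(2) by simp
  define m where "m = R div p"
  define k where "k = mu div p"
  have R: "R = p * m" using pR m_def by simp
  have mu: "mu = p * k" using pmu k_def by simp
  have m0: "0 < m" using R assms(4) by (cases m) auto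
  have k0: "0 < k" using mu assms(3) by (cases k) auto
  define e where "e = (k * \<Sum>{0..<p}) mod p"
  define B where "B = R choose mu"
  define C where "C = R - 1 choose (mu - 1)"
  define c where "c = m choose k"
  define c' where "c' = m - 1 choose (k - 1)"
  note K = key[OF assms(1-4), folded m_def k_def, folded e_def c_def B_def]
  then obtain W where W: "\<forall>r<p. m * Pplus R mu r = W + (if r = e then c else 0)" "p * W + c = B"
    by (elim exE conjE) (rule that)
  have b1: "mu * B = R * C" unfolding B_def C_def by (rule times_binomial_minus1_eq[OF assms(3)])
  have b2: "k * c = m * c'" unfolding c_def c'_def by (rule times_binomial_minus1_eq[OF k0])
  have "p * (k * B) = p * (m * C)" using b1 R mu by (simp add: mult.assoc mult.left_commute)
  hence kB: "k * B = m * C" using p0 by simp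
  have "k * (p * W + c) = k * B" using W(2) by simp
  hence E: "mu * W + m * c' = m * C" using kB b2 mu by (simp add: algebra_simps)
  have "real (mu * W + m * c') = real (m * C)" using E by (rule arg_cong)
  hence "real mu * real W + real m * real c' = real m * real C" by (simp only: of_nat_add of_nat_mult)
  hence rW: "real mu * real W = real m * (real C - real c')" by (simp add: algebra_simps)
  have "real (k * c) = real (m * c')" using b2 by (rule arg_cong)
  hence rc: "real k * real c = real m * real c'" by (simp only: of_nat_mult)
  have "m * Pplus R mu r = W + (if r = e then c else 0)" using W(1) assms(5) by blast
  hence "real (m * Pplus R mu r) = real (W + (if r = e then c else 0))" by (rule arg_cong)
  hence rN: "real m * real (Pplus R mu r) = real W + (if r = e then real c else 0)" by simp
  have mu0: "real mu > 0" "real m > 0" "real k > 0" using assms(3) m0 k0 by simp_all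
  have "real (Pplus R mu r) = (real W + (if r = e then real c else 0)) / real m"
    using rN mu0 by (simp add: field_simps)
  also have "\<dots> = (real C - real c') / real mu + (if r = e then real c' / real k else 0)"
  proof -
    have w: "real W / real m = (real C - real c') / real mu" using rW mu0 by (simp add: field_simps)
    have cc: "real c / real m = real c' / real k" using rc mu0 by (simp add: field_simps)
    show ?thesis using w cc by (simp add: add_divide_distrib)
  qed
  finally show ?thesis unfolding C_def c'_def m_def k_def e_def .
qed


lemma gcd8: "R mod 4 = (2::nat) \<Longrightarrow> gcd R 8 = 2"
proof -
  assume "R mod 4 = 2"
  hence h: "R mod 8 = 2 \<or> R mod 8 = 6" by presburger
  have e: "gcd R 8 = gcd 8 (R mod 8)" by (rule gcd_red_nat)
  have g: "gcd (8::nat) 2 = 2" "gcd (8::nat) 6 = 2" by (simp_all add: gcd_red_nat[of 8 6] gcd_red_nat[of 6 2])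
  from h show ?thesis
  proof
    assume a: "R mod 8 = 2" show ?thesis by (simp only: e a g)
  next
    assume a: "R mod 8 = 6" show ?thesis by (simp only: e a g)
  qed
qed

lemma gcd_modv: assumes "R mod n = (a::nat)" shows "gcd R n = gcd n a"
  using gcd_red_nat[of R n] assms by (simp only:)

lemma gcd6: "R mod 6 = (2::nat) \<or> R mod 6 = 4 \<Longrightarrow> gcd R 6 = 2"
proof -
  assume h: "R mod 6 = 2 \<or> R mod 6 = 4"
  have g: "gcd (6::nat) 2 = 2" "gcd (6::nat) 4 = 2" by (simp_all add: gcd_red_nat[of 6 4] gcd_red_nat[of 4 2])
  from h show ?thesis
  proof
    assume a: "R mod 6 = 2" show ?thesis by (simp only: gcd_modv[OF a] g)
  next
    assume a: "R mod 6 = 4" show ?thesis by (simp only: gcd_modv[OF a] g)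
  qed
qed

lemma gcd9: "R mod 9 = (3::nat) \<or> R mod 9 = 6 \<Longrightarrow> gcd R 9 = 3"
proof -
  assume h: "R mod 9 = 3 \<or> R mod 9 = 6"
  have g: "gcd (9::nat) 3 = 3" "gcd (9::nat) 6 = 3" by (simp_all add: gcd_red_nat[of 9 6] gcd_red_nat[of 6 3])
  from h show ?thesis
  proof
    assume a: "R mod 9 = 3" show ?thesis by (simp only: gcd_modv[OF a] g)
  next
    assume a: "R mod 9 = 6" show ?thesis by (simp only: gcd_modv[OF a] g)
  qed
qed

lemma eps_odd: assumes "odd (p::nat)" shows "(k * \<Sum>{0..<p}) mod p = 0"
proof -
  obtain q where q: "p - 1 = 2 * q" using assms by (metis dvd_def odd_two_times_div_two_nat  even_diff_nat odd_one)
  have "\<Sum>{0..<p} = p * (p - 1) div 2" by (simp add: Sum_Ico_nat)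
  also have "\<dots> = p * q" using q by simp
  finally show ?thesis by simp
qed

theorem theorem4p11:
  fixes R \<mu> :: nat
  defines "D \<equiv> gcd R \<mu>"
  assumes "0 < \<mu>" and "\<mu> < R"
    and "D \<ge> 2" and "prime D"
    and "Gorbits R \<mu> = {{x. x < R \<and> D dvd x}, {x. x < R \<and> \<not> D dvd x}}"
  shows
   "(\<mu> = 3 \<and> 3 dvd R \<and> R \<ge> 6 \<longrightarrow>
       real (Pplus R 3 0) = (real (R - 1 choose 2) - 1) / 3 + 1 \<and>
       real (Pplus R 3 1) = (real (R - 1 choose 2) - 1) / 3)
  \<and> (\<mu> = 4 \<and> R mod 4 = 2 \<and> R \<ge> 6 \<longrightarrow>
       real (Pplus R 4 0) = (real (R - 1 choose 3) + (real R - 2) / 2) / 4 \<and>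
       real (Pplus R 4 1) = (real (R - 1 choose 3) - (real R - 2) / 2) / 4)
  \<and> (\<mu> = 5 \<and> 5 dvd R \<and> R \<ge> 10 \<longrightarrow>
       real (Pplus R 5 0) = (real (R - 1 choose 4) - 1) / 5 + 1 \<and>
       real (Pplus R 5 1) = (real (R - 1 choose 4) - 1) / 5)
  \<and> (\<mu> = 6 \<and> ((R mod 6 = 2 \<and> R \<ge> 8) \<or> (R mod 6 = 4 \<and> R \<ge> 10)) \<longrightarrow>
       real (Pplus R 6 0) = (real (R - 1 choose 5) - real (R div 2 - 1 choose 2)) / 6 \<and>
       real (Pplus R 6 1) = (real (R - 1 choose 5) + real (R div 2 - 1 choose 2)) / 6)
  \<and> (\<mu> = 6 \<and> R mod 6 = 3 \<and> R \<ge> 9 \<longrightarrow>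
       real (Pplus R 6 0) = (real (R - 1 choose 5) / 2 + (real R - 3) / 3) / 3 \<and>
       real (Pplus R 6 1) = (real (R - 1 choose 5) - (real R - 3) / 3) / 6)
  \<and> (\<mu> = 7 \<and> 7 dvd R \<and> R \<ge> 14 \<longrightarrow>
       real (Pplus R 7 0) = (real (R - 1 choose 6) - 1) / 7 + 1 \<and>
       real (Pplus R 7 1) = (real (R - 1 choose 6) - 1) / 7)
  \<and> (\<mu> = 8 \<and> R mod 4 = 2 \<and> R \<ge> 10 \<longrightarrow>
       real (Pplus R 8 0) = (real (R - 1 choose 7) + real (R div 2 - 1 choose 3)) / 8 \<and>
       real (Pplus R 8 1) = (real (R - 1 choose 7) - real (R div 2 - 1 choose 3)) / 8)
  \<and> (\<mu> = 9 \<and> ((R mod 9 = 3 \<and> R \<ge> 12) \<or> (R mod 9 = 6 \<and> R \<ge> 15)) \<longrightarrow>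
       real (Pplus R 9 0) = (real (R - 1 choose 8) + 2 * real (R div 3 - 1 choose 2)) / 9 \<and>
       real (Pplus R 9 1) = (real (R - 1 choose 8) - real (R div 3 - 1 choose 2)) / 9)
  \<and> (\<forall>x < R. Pplus R \<mu> x = (if D dvd x then Pplus R \<mu> 0 else Pplus R \<mu> 1))"
proof -
  have R0: "0 < R" using \<open>0 < \<mu>\<close> \<open>\<mu> < R\<close> by simp
  have mu0: "0 < \<mu>" using \<open>0 < \<mu>\<close> .
  have pD: "prime D" using \<open>prime D\<close> .
  have Dg: "D = gcd R \<mu>" by (simp add: D_def)
  have G: "real (Pplus R \<mu> r) = (real (R - 1 choose (\<mu> - 1)) - real (R div D - 1 choose (\<mu> div D - 1))) / real \<mu>
     + (if r = ((\<mu> div D) * \<Sum>{0..<D}) mod D then real (R div D - 1 choose (\<mu> div D - 1)) / real (\<mu> div D) else 0)"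
    if "r < D" for r using key2[OF pD Dg mu0 R0 that] .
  have D2: "1 < D" using \<open>D \<ge> 2\<close> by simp
  have c1: "\<mu> = 3 \<and> 3 dvd R \<and> R \<ge> 6 \<longrightarrow>
       real (Pplus R 3 0) = (real (R - 1 choose 2) - 1) / 3 + 1 \<and>
       real (Pplus R 3 1) = (real (R - 1 choose 2) - 1) / 3"
  proof
    assume h: "\<mu> = 3 \<and> 3 dvd R \<and> R \<ge> 6"
    have Dv: "D = 3" using h by (simp add: D_def)
    show "real (Pplus R 3 0) = (real (R - 1 choose 2) - 1) / 3 + 1 \<and>
       real (Pplus R 3 1) = (real (R - 1 choose 2) - 1) / 3"
      using G[of 0] G[of 1] h Dv by (simp add: Sum_Ico_nat)
  qed
  have c2: "\<mu> = 4 \<and> R mod 4 = 2 \<and> R \<ge> 6 \<longrightarrow>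
       real (Pplus R 4 0) = (real (R - 1 choose 3) + (real R - 2) / 2) / 4 \<and>
       real (Pplus R 4 1) = (real (R - 1 choose 3) - (real R - 2) / 2) / 4"
  proof
    assume h: "\<mu> = 4 \<and> R mod 4 = 2 \<and> R \<ge> 6"
    have Dv: "D = 2" using h by (simp add: D_def gcd_red_nat[of R 4])
    have "2 dvd R" using h by presburger
    then obtain m where m: "R = 2 * m" by (rule dvdE)
    have X1: "real (R div 2 - 1 choose 1) = (real R - 2) / 2" using m h by (simp add: of_nat_diff)
      have g0: "real (Pplus R 4 0) = (real (R - 1 choose 3) - real (R div 2 - 1 choose 1)) / 4 + real (R div 2 - 1 choose 1) / 2" using G[of 0] h Dv by (simp add: Sum_Ico_nat)
      have g1: "real (Pplus R 4 1) = (real (R - 1 choose 3) - real (R div 2 - 1 choose 1)) / 4" using G[of 1] h Dv D2 by (simp add: Sum_Ico_nat)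
      show "       real (Pplus R 4 0) = (real (R - 1 choose 3) + (real R - 2) / 2) / 4 \<and>
       real (Pplus R 4 1) = (real (R - 1 choose 3) - (real R - 2) / 2) / 4" using g0 g1 X1 by (intro conjI) (simp_all add: field_simps)
  qed
  have c3: "\<mu> = 5 \<and> 5 dvd R \<and> R \<ge> 10 \<longrightarrow>
       real (Pplus R 5 0) = (real (R - 1 choose 4) - 1) / 5 + 1 \<and>
       real (Pplus R 5 1) = (real (R - 1 choose 4) - 1) / 5"
  proof
    assume h: "\<mu> = 5 \<and> 5 dvd R \<and> R \<ge> 10"
    have Dv: "D = 5" using h by (simp add: D_def)
    show "real (Pplus R 5 0) = (real (R - 1 choose 4) - 1) / 5 + 1 \<and>
       real (Pplus R 5 1) = (real (R - 1 choose 4) - 1) / 5"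
      using G[of 0] G[of 1] h Dv by (simp add: Sum_Ico_nat)
  qed
  have c4: "\<mu> = 6 \<and> ((R mod 6 = 2 \<and> R \<ge> 8) \<or> (R mod 6 = 4 \<and> R \<ge> 10)) \<longrightarrow>
       real (Pplus R 6 0) = (real (R - 1 choose 5) - real (R div 2 - 1 choose 2)) / 6 \<and>
       real (Pplus R 6 1) = (real (R - 1 choose 5) + real (R div 2 - 1 choose 2)) / 6"
  proof
    assume h: "\<mu> = 6 \<and> ((R mod 6 = 2 \<and> R \<ge> 8) \<or> (R mod 6 = 4 \<and> R \<ge> 10))"
    have Dv: "D = 2" using h gcd6[of R] by (auto simp add: D_def)
      have g0: "real (Pplus R 6 0) = (real (R - 1 choose 5) - real (R div 2 - 1 choose 2)) / 6" using G[of 0] h Dv by (simp add: Sum_Ico_nat)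
      have g1: "real (Pplus R 6 1) = (real (R - 1 choose 5) - real (R div 2 - 1 choose 2)) / 6 + real (R div 2 - 1 choose 2) / 3" using G[of 1] h Dv D2 by (simp add: Sum_Ico_nat)
      show "       real (Pplus R 6 0) = (real (R - 1 choose 5) - real (R div 2 - 1 choose 2)) / 6 \<and>
       real (Pplus R 6 1) = (real (R - 1 choose 5) + real (R div 2 - 1 choose 2)) / 6" using g0 g1 by (intro conjI) (simp_all add: field_simps)
  qed
  have c5: "\<mu> = 6 \<and> R mod 6 = 3 \<and> R \<ge> 9 \<longrightarrow>
       real (Pplus R 6 0) = (real (R - 1 choose 5) / 2 + (real R - 3) / 3) / 3 \<and>
       real (Pplus R 6 1) = (real (R - 1 choose 5) - (real R - 3) / 3) / 6"
  proof
    assume h: "\<mu> = 6 \<and> R mod 6 = 3 \<and> R \<ge> 9"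
    have Dv: "D = 3" using h by (simp add: D_def gcd_red_nat[of R 6])
    have "3 dvd R" using h by presburger
    then obtain m where m: "R = 3 * m" by (rule dvdE)
    have X1: "real (R div 3 - 1 choose 1) = (real R - 3) / 3" using m h by (simp add: of_nat_diff)
      have g0: "real (Pplus R 6 0) = (real (R - 1 choose 5) - real (R div 3 - 1 choose 1)) / 6 + real (R div 3 - 1 choose 1) / 2" using G[of 0] h Dv by (simp add: Sum_Ico_nat)
      have g1: "real (Pplus R 6 1) = (real (R - 1 choose 5) - real (R div 3 - 1 choose 1)) / 6" using G[of 1] h Dv D2 by (simp add: Sum_Ico_nat)
      show "       real (Pplus R 6 0) = (real (R - 1 choose 5) / 2 + (real R - 3) / 3) / 3 \<and>
       real (Pplus R 6 1) = (real (R - 1 choose 5) - (real R - 3) / 3) / 6" using g0 g1 X1 by (intro conjI) (simp_all add: field_simps)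
  qed
  have c6: "\<mu> = 7 \<and> 7 dvd R \<and> R \<ge> 14 \<longrightarrow>
       real (Pplus R 7 0) = (real (R - 1 choose 6) - 1) / 7 + 1 \<and>
       real (Pplus R 7 1) = (real (R - 1 choose 6) - 1) / 7"
  proof
    assume h: "\<mu> = 7 \<and> 7 dvd R \<and> R \<ge> 14"
    have Dv: "D = 7" using h by (simp add: D_def)
    show "real (Pplus R 7 0) = (real (R - 1 choose 6) - 1) / 7 + 1 \<and>
       real (Pplus R 7 1) = (real (R - 1 choose 6) - 1) / 7"
      using G[of 0] G[of 1] h Dv by (simp add: Sum_Ico_nat)
  qed
  have c7: "\<mu> = 8 \<and> R mod 4 = 2 \<and> R \<ge> 10 \<longrightarrow>
       real (Pplus R 8 0) = (real (R - 1 choose 7) + real (R div 2 - 1 choose 3)) / 8 \<and>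
       real (Pplus R 8 1) = (real (R - 1 choose 7) - real (R div 2 - 1 choose 3)) / 8"
  proof
    assume h: "\<mu> = 8 \<and> R mod 4 = 2 \<and> R \<ge> 10"
    have Dv: "D = 2" using h gcd8[of R] by (simp add: D_def)
      have g0: "real (Pplus R 8 0) = (real (R - 1 choose 7) - real (R div 2 - 1 choose 3)) / 8 + real (R div 2 - 1 choose 3) / 4" using G[of 0] h Dv by (simp add: Sum_Ico_nat)
      have g1: "real (Pplus R 8 1) = (real (R - 1 choose 7) - real (R div 2 - 1 choose 3)) / 8" using G[of 1] h Dv D2 by (simp add: Sum_Ico_nat)
      show "       real (Pplus R 8 0) = (real (R - 1 choose 7) + real (R div 2 - 1 choose 3)) / 8 \<and>
       real (Pplus R 8 1) = (real (R - 1 choose 7) - real (R div 2 - 1 choose 3)) / 8" using g0 g1 by (intro conjI) (simp_all add: field_simps)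
  qed
  have c8: "\<mu> = 9 \<and> ((R mod 9 = 3 \<and> R \<ge> 12) \<or> (R mod 9 = 6 \<and> R \<ge> 15)) \<longrightarrow>
       real (Pplus R 9 0) = (real (R - 1 choose 8) + 2 * real (R div 3 - 1 choose 2)) / 9 \<and>
       real (Pplus R 9 1) = (real (R - 1 choose 8) - real (R div 3 - 1 choose 2)) / 9"
  proof
    assume h: "\<mu> = 9 \<and> ((R mod 9 = 3 \<and> R \<ge> 12) \<or> (R mod 9 = 6 \<and> R \<ge> 15))"
    have Dv: "D = 3" using h gcd9[of R] by (auto simp add: D_def)
      have g0: "real (Pplus R 9 0) = (real (R - 1 choose 8) - real (R div 3 - 1 choose 2)) / 9 + real (R div 3 - 1 choose 2) / 3" using G[of 0] h Dv by (simp add: Sum_Ico_nat)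
      have g1: "real (Pplus R 9 1) = (real (R - 1 choose 8) - real (R div 3 - 1 choose 2)) / 9" using G[of 1] h Dv D2 by (simp add: Sum_Ico_nat)
      show "       real (Pplus R 9 0) = (real (R - 1 choose 8) + 2 * real (R div 3 - 1 choose 2)) / 9 \<and>
       real (Pplus R 9 1) = (real (R - 1 choose 8) - real (R div 3 - 1 choose 2)) / 9" using g0 g1 by (intro conjI) (simp_all add: field_simps)
  qed
  have c9: "\<forall>x < R. Pplus R \<mu> x = (if D dvd x then Pplus R \<mu> 0 else Pplus R \<mu> 1)"
  proof (intro allI impI)
    fix x assume "x < R"
    have px: "Pplus R \<mu> x = Pplus R \<mu> (x mod D)" using Pplus_modD[OF R0 mu0] Dg by simp
    show "Pplus R \<mu> x = (if D dvd x then Pplus R \<mu> 0 else Pplus R \<mu> 1)"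
    proof (cases "D dvd x")
      case True then show ?thesis using px by simp
    next
      case False
      define r where "r = x mod D"
      have r: "0 < r" "r < D" using False D2 unfolding r_def by (auto simp: mod_eq_0_iff_dvd[symmetric] gr0I)
      show ?thesis
      proof (cases "D = 2")
        case True
        hence "r = 1" using r by simp
        thus ?thesis using px False r_def by simp
      next
        case False
        hence "D > 2" using \<open>D \<ge> 2\<close> by simp
        hence "odd D" by (rule prime_odd_nat[OF pD])
        hence e0: "((\<mu> div D) * \<Sum>{0..<D}) mod D = 0" by (rule eps_odd)
        have "real (Pplus R \<mu> r) = real (Pplus R \<mu> 1)"
          using G[OF r(2)] G[of 1] D2 e0 r by simp
        hence "Pplus R \<mu> r = Pplus R \<mu> 1" by simp
        thus ?thesis using px \<open>\<not> D dvd x\<close> r_def by simp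
      qed
    qed
  qed
  show ?thesis using c1 c2 c3 c4 c5 c6 c7 c8 c9 by blast
qed

end
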